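(* Let $\tau=(s_1,a_1,s_2,a_2,\dots,s_T,a_T,s_{T+1})$ be a trajectory, and suppose that for each $t$ there is a real-valued reward variable $r_t$ and a binary optimality variable $\mathcal{O}_t\in\{0,1\}$, with joint density $$p(\tau,\mathcal{O}_{1:T},r_{1:T}) = p(s_1)\prod_{t=1}^{T} p(r_t\mid s_t,a_t)\,p(\mathcal{O}_t\mid r_t)\,p(s_{t+1}\mid s_t,a_t)\,p(a_t),$$ so that $p(\mathcal{O}_t\mid s_t,a_t)=\int p(\mathcal{O}_t\mid r_t)\,p(r_t\mid s_t,a_t)\,dr_t$ and $p(\tau)$ is obtained by marginalizing out all $\mathcal{O}_t$ and $r_t$. For each $t$, let $q(\cdot\mid r_t)$ be any probability distribution on $\{0,1\}$ (depending on the reward value $r_t$). Then $$\log p(\tau)\;\ge\;\log p(s_1)+\sum_{t=1}^{T}\Big[-D_{KL}\big(q(\mathcal{O}_t\mid r_t)\,\|\,p(\mathcal{O}_t\mid s_t,a_t)\big)+\log p(s_{t+1}\mid s_t,a_t)+\log p(a_t)\Big].$$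
   Context: $D_{KL}(q\|p)=\sum_{o\in\{0,1\}} q(o)\log\frac{q(o)}{p(o)}$ denotes the Kullback–Leibler divergence (the "reverse" KL, with the variational distribution $q$ in the first argument). The right-hand side is called the evidence lower bound (ELBO). *)

theory Defs
  imports "HOL-Probability.Probability"
begin

definition elog :: "real \<Rightarrow> ereal" where
  "elog x = (if x > 0 then ereal (ln x) else -\<infinity>)"

text \<open>Reverse KL divergence of distributions on {0,1} (False = 0, True = 1),
  with conventions 0 log(0/p) = 0 and q log(q/0) = +infinity for q > 0.\<close>
definition KL :: "(bool \<Rightarrow> real) \<Rightarrow> (bool \<Rightarrow> real) \<Rightarrow> ereal" where
  "KL q p = (if \<exists>b. q b > 0 \<and> p b \<le> 0 then \<infinity>
             else ereal (\<Sum>b\<in>UNIV. if q b = 0 then 0 else q b * ln (q b / p b)))"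

definition joint ::
  "('s \<Rightarrow> real) \<Rightarrow> ('s \<Rightarrow> 'a \<Rightarrow> 's \<Rightarrow> real) \<Rightarrow> ('a \<Rightarrow> real) \<Rightarrow>
   ('s \<Rightarrow> 'a \<Rightarrow> real \<Rightarrow> real) \<Rightarrow> (real \<Rightarrow> bool \<Rightarrow> real) \<Rightarrow> nat \<Rightarrow>
   (nat \<Rightarrow> 's) \<Rightarrow> (nat \<Rightarrow> 'a) \<Rightarrow> (nat \<Rightarrow> bool) \<Rightarrow> (nat \<Rightarrow> real) \<Rightarrow> real" where
  "joint p1 P pa pr pO T s a Ob r =
     p1 (s 1) * (\<Prod>t\<in>{1..T}. pr (s t) (a t) (r t) * pO (r t) (Ob t)
                              * P (s t) (a t) (s (Suc t)) * pa (a t))"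

definition traj_marginal ::
  "('s \<Rightarrow> real) \<Rightarrow> ('s \<Rightarrow> 'a \<Rightarrow> 's \<Rightarrow> real) \<Rightarrow> ('a \<Rightarrow> real) \<Rightarrow>
   ('s \<Rightarrow> 'a \<Rightarrow> real \<Rightarrow> real) \<Rightarrow> (real \<Rightarrow> bool \<Rightarrow> real) \<Rightarrow> nat \<Rightarrow>
   (nat \<Rightarrow> 's) \<Rightarrow> (nat \<Rightarrow> 'a) \<Rightarrow> real" where
  "traj_marginal p1 P pa pr pO T s a =
     (\<integral>r. (\<Sum>Ob\<in>{1..T} \<rightarrow>\<^sub>E (UNIV :: bool set). joint p1 P pa pr pO T s a Ob r)
        \<partial>(PiM {1..T} (\<lambda>_. lborel)))"

definition pO_sa ::
  "('s \<Rightarrow> 'a \<Rightarrow> real \<Rightarrow> real) \<Rightarrow> (real \<Rightarrow> bool \<Rightarrow> real) \<Rightarrow> 's \<Rightarrow> 'a \<Rightarrow> bool \<Rightarrow> real" where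
  "pO_sa pr pO st ac b = (\<integral>x. pO x b * pr st ac x \<partial>lborel)"

end

theory Submission
  imports Defs
begin

lemma elog_mult:
  assumes "x \<ge> 0" "y \<ge> 0"
  shows "elog (x * y) = elog x + elog y"
proof (cases "x > 0 \<and> y > 0")
  case True
  then show ?thesis by (simp add: elog_def ln_mult)
next
  case False
  then have "x = 0 \<or> y = 0" using assms by auto
  then show ?thesis using assms by (auto simp: elog_def)
qed

lemma elog_prod:
  assumes "finite A" "\<And>t. t \<in> A \<Longrightarrow> f t \<ge> (0::real)"
  shows "elog (\<Prod>t\<in>A. f t) = (\<Sum>t\<in>A. elog (f t))"
  using assms
proof (induction A rule: finite_induct)
  case empty
  then show ?case by (simp add: elog_def)
next
  case (insert x F)
  then show ?case by (simp add: elog_mult prod_nonneg)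
qed

lemma KL_nonneg:
  assumes "\<And>b. q b \<ge> 0" "q False + q True = 1" "p False + p True = 1" "\<And>b. p b \<ge> 0"
  shows "KL q p \<ge> 0"
proof (cases "\<exists>b. q b > 0 \<and> p b \<le> 0")
  case True
  then show ?thesis by (simp add: KL_def)
next
  case False
  have term_ge: "(if q b = 0 then 0 else q b * ln (q b / p b)) \<ge> q b - p b" for b
  proof (cases "q b = 0")
    case True
    then show ?thesis using assms(4)[of b] by simp
  next
    case qn: False
    then have qp: "q b > 0" using assms(1)[of b] by auto
    then have pp: "p b > 0" using False by force
    have "ln (p b / q b) \<le> p b / q b - 1" using qp pp by (intro ln_le_minus_one) simp
    moreover have "ln (q b / p b) = - ln (p b / q b)" using qp pp by (simp add: ln_div)
    ultimately have "ln (q b / p b) \<ge> 1 - p b / q b" by simp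
    then have "q b * ln (q b / p b) \<ge> q b * (1 - p b / q b)" using qp by (intro mult_left_mono) auto
    then show ?thesis using qn qp by (simp add: algebra_simps)
  qed
  have "0 = (\<Sum>b\<in>UNIV. q b - p b)" using assms by (simp add: UNIV_bool)
  also have "\<dots> \<le> (\<Sum>b\<in>UNIV. if q b = 0 then 0 else q b * ln (q b / p b))"
    by (intro sum_mono term_ge)
  finally show ?thesis using False by (simp add: KL_def)
qed

theorem mainTheorem1:
  fixes p1 :: "'s \<Rightarrow> real" and P :: "'s \<Rightarrow> 'a \<Rightarrow> 's \<Rightarrow> real" and pa :: "'a \<Rightarrow> real"
    and pr :: "'s \<Rightarrow> 'a \<Rightarrow> real \<Rightarrow> real" and pO :: "real \<Rightarrow> bool \<Rightarrow> real"
    and T :: nat and s :: "nat \<Rightarrow> 's" and a :: "nat \<Rightarrow> 'a"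
    and q :: "nat \<Rightarrow> real \<Rightarrow> bool \<Rightarrow> real" and r :: "nat \<Rightarrow> real"
  assumes p1_nonneg: "\<And>x. p1 x \<ge> 0"
    and P_nonneg: "\<And>x u y. P x u y \<ge> 0"
    and pa_nonneg: "\<And>u. pa u \<ge> 0"
    and pr_meas: "\<And>x u. pr x u \<in> borel_measurable lborel"
    and pr_nonneg: "\<And>x u v. pr x u v \<ge> 0"
    and pr_integrable: "\<And>x u. integrable lborel (pr x u)"
    and pr_normalized: "\<And>x u. (\<integral>v. pr x u v \<partial>lborel) = 1"
    and pO_meas: "\<And>b. (\<lambda>v. pO v b) \<in> borel_measurable lborel"
    and pO_nonneg: "\<And>v b. pO v b \<ge> 0"
    and pO_normalized: "\<And>v. pO v False + pO v True = 1"
    and q_nonneg: "\<And>t v b. q t v b \<ge> 0"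
    and q_normalized: "\<And>t v. q t v False + q t v True = 1"
  shows "elog (traj_marginal p1 P pa pr pO T s a) \<ge>
           elog (p1 (s 1)) +
           (\<Sum>t\<in>{1..T}. - KL (q t (r t)) (pO_sa pr pO (s t) (a t))
                          + elog (P (s t) (a t) (s (Suc t))) + elog (pa (a t)))"
proof -
  interpret product_sigma_finite "\<lambda>_. lborel" by standard
  define C where "C t = P (s t) (a t) (s (Suc t)) * pa (a t)" for t
  define g where "g t v = pr (s t) (a t) v * C t" for t v
  have C_nonneg: "C t \<ge> 0" for t unfolding C_def using P_nonneg pa_nonneg by simp
  have sumOb: "(\<Sum>Ob\<in>{1..T} \<rightarrow>\<^sub>E (UNIV :: bool set). joint p1 P pa pr pO T s a Ob rr)
      = p1 (s 1) * (\<Prod>t\<in>{1..T}. g t (rr t))" for rr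
  proof -
    have "(\<Sum>Ob\<in>{1..T} \<rightarrow>\<^sub>E (UNIV :: bool set). joint p1 P pa pr pO T s a Ob rr)
       = p1 (s 1) * (\<Sum>Ob\<in>{1..T} \<rightarrow>\<^sub>E (UNIV :: bool set). \<Prod>t\<in>{1..T}.
            (\<lambda>t b. pr (s t) (a t) (rr t) * pO (rr t) b * P (s t) (a t) (s (Suc t)) * pa (a t)) t (Ob t))"
      unfolding joint_def by (simp add: sum_distrib_left)
    also have "\<dots> = p1 (s 1) * (\<Prod>t\<in>{1..T}. \<Sum>b\<in>UNIV.
            pr (s t) (a t) (rr t) * pO (rr t) b * P (s t) (a t) (s (Suc t)) * pa (a t))"
      by (subst prod_sum_PiE) auto
    also have "\<dots> = p1 (s 1) * (\<Prod>t\<in>{1..T}. g t (rr t))"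
    proof -
      have "(\<Sum>b\<in>UNIV. pr (s t) (a t) (rr t) * pO (rr t) b * P (s t) (a t) (s (Suc t)) * pa (a t))
            = g t (rr t)" for t
      proof -
        have "(\<Sum>b\<in>UNIV. pr (s t) (a t) (rr t) * pO (rr t) b * P (s t) (a t) (s (Suc t)) * pa (a t))
           = pr (s t) (a t) (rr t) * (pO (rr t) False + pO (rr t) True) * C t"
          by (simp add: UNIV_bool C_def algebra_simps)
        then show ?thesis using pO_normalized by (simp add: g_def)
      qed
      then show ?thesis by simp
    qed
    finally show ?thesis .
  qed
  have gint: "integrable lborel (g t)" for t
    unfolding g_def using pr_integrable by simp
  have "traj_marginal p1 P pa pr pO T s a
      = (\<integral>rr. p1 (s 1) * (\<Prod>t\<in>{1..T}. g t (rr t)) \<partial>(PiM {1..T} (\<lambda>_. lborel)))"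
    unfolding traj_marginal_def sumOb by simp
  also have "\<dots> = p1 (s 1) * (\<Prod>t\<in>{1..T}. integral\<^sup>L lborel (g t))"
    using product_integral_prod[of "{1..T}" g] gint by simp
  also have "\<dots> = p1 (s 1) * (\<Prod>t\<in>{1..T}. C t)"
    unfolding g_def using pr_normalized by simp
  finally have tm: "traj_marginal p1 P pa pr pO T s a = p1 (s 1) * (\<Prod>t\<in>{1..T}. C t)" .
  have lhs: "elog (traj_marginal p1 P pa pr pO T s a) =
      elog (p1 (s 1)) + (\<Sum>t\<in>{1..T}. elog (P (s t) (a t) (s (Suc t))) + elog (pa (a t)))"
    unfolding tm using p1_nonneg C_nonneg P_nonneg pa_nonneg
    by (simp add: elog_mult elog_prod prod_nonneg C_def)
  have pOint: "integrable lborel (\<lambda>x. pO x b * pr st ac x)" for b st ac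
  proof (rule Bochner_Integration.integrable_bound[OF pr_integrable[of st ac]])
    show "(\<lambda>x. pO x b * pr st ac x) \<in> borel_measurable lborel"
      using pO_meas pr_meas by measurable
    have "pO x b \<le> 1" for x
      using pO_normalized[of x] pO_nonneg[of x False] pO_nonneg[of x True] by (cases b) auto
    then show "AE x in lborel. norm (pO x b * pr st ac x) \<le> norm (pr st ac x)"
      using pO_nonneg pr_nonneg by (auto intro!: mult_left_le_one_le simp: abs_mult)
  qed
  have pOsum: "pO_sa pr pO st ac False + pO_sa pr pO st ac True = 1" for st ac
  proof -
    have "pO_sa pr pO st ac False + pO_sa pr pO st ac True
        = (\<integral>x. pO x False * pr st ac x + pO x True * pr st ac x \<partial>lborel)"
      unfolding pO_sa_def using pOint by simp
    also have "\<dots> = (\<integral>x. pr st ac x \<partial>lborel)"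
      by (intro Bochner_Integration.integral_cong refl)
         (metis pO_normalized distrib_right mult_1)
    finally show ?thesis using pr_normalized by simp
  qed
  have KLn: "KL (q t (r t)) (pO_sa pr pO (s t) (a t)) \<ge> 0" for t
    by (rule KL_nonneg) (use q_nonneg q_normalized pOsum pO_nonneg pr_nonneg in \<open>auto simp: pO_sa_def\<close>)
  have "(\<Sum>t\<in>{1..T}. - KL (q t (r t)) (pO_sa pr pO (s t) (a t))
                          + elog (P (s t) (a t) (s (Suc t))) + elog (pa (a t)))
     \<le> (\<Sum>t\<in>{1..T}. elog (P (s t) (a t) (s (Suc t))) + elog (pa (a t)))"
  proof (rule sum_mono)
    fix t
    have "- KL (q t (r t)) (pO_sa pr pO (s t) (a t)) \<le> 0" using KLn[of t] by simp
    then have "- KL (q t (r t)) (pO_sa pr pO (s t) (a t)) + elog (P (s t) (a t) (s (Suc t)))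
          \<le> 0 + elog (P (s t) (a t) (s (Suc t)))" by (rule add_right_mono)
    then show "- KL (q t (r t)) (pO_sa pr pO (s t) (a t))
                          + elog (P (s t) (a t) (s (Suc t))) + elog (pa (a t))
        \<le> elog (P (s t) (a t) (s (Suc t))) + elog (pa (a t))"
      by (metis add_right_mono add_0)
  qed
  then show ?thesis unfolding lhs by (rule add_left_mono)
qed

end
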